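(* Let $k\ge 1$ and $d\ge 0$ be integers and let $F_1,F_2$ be permutations (bijections, not necessarily linear) of $\mathbb{F}_2^k$. Then $(F_1,F_2)$ is a Correlation Immune Pair of strength $d$ if and only if the binary code $$C(F_1,F_2)=\{(x+y,\,F_1(x),\,F_2(y)) : x,y\in\mathbb{F}_2^k\}\subseteq \mathbb{F}_2^{3k},$$ which has $2^{2k}$ elements, has dual distance at least $d+1$.
   Context: For $a,x\in\mathbb{F}_2^k$, $a\cdot x$ is the usual scalar product and $w_H$ denotes Hamming weight. For a map $F:\mathbb{F}_2^k\to\mathbb{F}_2^k$ and $b\in\mathbb{F}_2^k$, let $b\cdot F$ be the Boolean function $x\mapsto b\cdot F(x)$, and define its Fourier transform at $a\in\mathbb{F}_2^k$ by $\widehat{b\cdot F}(a)=\sum_{x\in\mathbb{F}_2^k,\ b\cdot F(x)=1}(-1)^{a\cdot x}$ (an integer). A pair $(F_1,F_2)$ of permutations of $\mathbb{F}_2^k$ is a Correlation Immune Pair (CIP) of strength $d$ if for every $(a,b,c)\in(\mathbb{F}_2^k)^3$ with $a\neq 0$ and $w_H(a)+w_H(b)+w_H(c)\le d$, one has $\widehat{b\cdot F_1}(a)=0$ or $\widehat{c\cdot F_2}(a)=0$. For a (possibly nonlinear) binary code $C$ of length $n$, its distance distribution is $B_i=\frac{1}{|C|}|\{(x,y)\in C\times C: d_H(x,y)=i\}|$, $0\le i\le n$, with distance enumerator $D_C(X,Y)=\sum_i B_iX^{n-i}Y^i$; the dual distance distribution $(B_i^\perp)$ is defined by $\sum_i B_i^\perp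 X^{n-i}Y^i=\frac{1}{|C|}D_C(X+Y,X-Y)$, and the dual distance of $C$ is the smallest $i>0$ with $B_i^\perp\neq 0$ (taken to be $+\infty$ if there is none). *)

theory Defs
  imports Complex_Main "HOL-Computational_Algebra.Polynomial" "HOL-Library.Extended_Nat"
begin

text \<open>Vectors of F_2^k are boolean lists of length k (True = 1).\<close>

definition vecs :: "nat \<Rightarrow> bool list set" where
  "vecs k = {xs. length xs = k}"

definition vadd :: "bool list \<Rightarrow> bool list \<Rightarrow> bool list" where
  "vadd xs ys = map2 (\<lambda>a b. a \<noteq> b) xs ys"

definition zero_vec :: "nat \<Rightarrow> bool list" where
  "zero_vec k = replicate k False"

definition dot :: "bool list \<Rightarrow> bool list \<Rightarrow> bool" where
  "dot xs ys = odd (length (filter (\<lambda>p. fst p \<and> snd p) (zip xs ys)))"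

definition wH :: "bool list \<Rightarrow> nat" where
  "wH xs = length (filter id xs)"

definition dH :: "bool list \<Rightarrow> bool list \<Rightarrow> nat" where
  "dH xs ys = wH (vadd xs ys)"

definition fourier :: "nat \<Rightarrow> (bool list \<Rightarrow> bool list) \<Rightarrow> bool list \<Rightarrow> bool list \<Rightarrow> int" where
  "fourier k F b a = (\<Sum>x\<in>{x\<in>vecs k. dot b (F x)}. (if dot a x then -1 else 1))"

definition CIP :: "nat \<Rightarrow> nat \<Rightarrow> (bool list \<Rightarrow> bool list) \<Rightarrow> (bool list \<Rightarrow> bool list) \<Rightarrow> bool" where
  "CIP k d F1 F2 \<longleftrightarrow>
     (\<forall>a\<in>vecs k. \<forall>b\<in>vecs k. \<forall>c\<in>vecs k.
        a \<noteq> zero_vec k \<and> wH a + wH b + wH c \<le> d \<longrightarrow>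
        fourier k F1 b a = 0 \<or> fourier k F2 c a = 0)"

definition dist_distr :: "bool list set \<Rightarrow> nat \<Rightarrow> real" where
  "dist_distr C i = real (card {(x, y). x \<in> C \<and> y \<in> C \<and> dH x y = i}) / real (card C)"

text \<open>Dual distance distribution: B_j^perp is the coefficient of X^(n-j) Y^j in
  (1/|C|) sum_i B_i (X+Y)^(n-i) (X-Y)^i; since the form is homogeneous of degree n
  we dehomogenise at X = 1 and take the coefficient of Y^j.\<close>
definition dual_distr :: "nat \<Rightarrow> bool list set \<Rightarrow> nat \<Rightarrow> real" where
  "dual_distr n C j = coeff (smult (1 / real (card C))
      (\<Sum>i\<le>n. smult (dist_distr C i) ([:1, 1:] ^ (n - i) * [:1, -1:] ^ i))) j"

definition dual_distance :: "nat \<Rightarrow> bool list set \<Rightarrow> enat" where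
  "dual_distance n C =
     (if \<exists>i>0. dual_distr n C i \<noteq> 0 then enat (LEAST i. i > 0 \<and> dual_distr n C i \<noteq> 0)
      else \<infinity>)"

definition code_CF :: "nat \<Rightarrow> (bool list \<Rightarrow> bool list) \<Rightarrow> (bool list \<Rightarrow> bool list) \<Rightarrow> bool list set" where
  "code_CF k F1 F2 = {vadd x y @ F1 x @ F2 y | x y. x \<in> vecs k \<and> y \<in> vecs k}"

end

theory Submission
  imports Defs
begin

definition chi :: "bool list \<Rightarrow> bool list \<Rightarrow> real" where
  "chi w u = (if dot w u then -1 else 1)"

definition G :: "bool list \<Rightarrow> real poly" where
  "G u = (\<Sum>w\<in>vecs (length u). monom (chi w u) (wH w))"

lemma dot_Cons[simp]: "dot (a#w) (b#u) = ((a \<and> b) \<noteq> dot w u)"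
  by (cases "a \<and> b") (auto simp: dot_def)
lemma dot_Nil[simp]: "dot [] u = False" "dot w [] = False"
  by (simp_all add: dot_def)
lemma wH_Cons[simp]: "wH (a#w) = (if a then 1 else 0) + wH w"
  by (simp add: wH_def)
lemma wH_Nil[simp]: "wH [] = 0" by (simp add: wH_def)
lemma wH_append[simp]: "wH (a@b) = wH a + wH b" by (simp add: wH_def)

lemma vecs_0: "vecs 0 = {[]}" by (auto simp: vecs_def)
lemma vecs_Suc: "vecs (Suc n) = (#) True ` vecs n \<union> (#) False ` vecs n"
proof -
  have "x \<in> (#) True ` vecs n \<union> (#) False ` vecs n" if "length x = Suc n" for x
    using that by (cases x) (auto simp: vecs_def)
  then show ?thesis by (auto simp: vecs_def)
qed
lemma finite_vecs[simp]: "finite (vecs n)"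
  by (induction n) (auto simp: vecs_0 vecs_Suc)

lemma sum_vecs_Suc: "(\<Sum>w\<in>vecs (Suc n). f w) = (\<Sum>w\<in>vecs n. f (True#w)) + (\<Sum>w\<in>vecs n. f (False#w))"
proof -
  have "(\<Sum>w\<in>vecs (Suc n). f w) = (\<Sum>w\<in>(#) True ` vecs n. f w) + (\<Sum>w\<in>(#) False ` vecs n. f w)"
    unfolding vecs_Suc by (rule sum.union_disjoint) auto
  also have "\<dots> = (\<Sum>w\<in>vecs n. f (True#w)) + (\<Sum>w\<in>vecs n. f (False#w))"
    by (subst (1 2) sum.reindex) (auto simp: inj_on_def)
  finally show ?thesis .
qed

lemma chi_Cons: "chi (a#w) (c#u) = (if a \<and> c then -1 else 1) * chi w u"
  by (simp add: chi_def)

lemma G_Cons: "G (c#u) = [:1, if c then -1 else 1:] * G u"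
proof -
  have m: "[:1, s:] * monom (x::real) n = monom x n + monom (s*x) (Suc n)" for s x n
    by (simp add: monom_Suc algebra_simps smult_monom)
  show ?thesis
    unfolding G_def by (simp add: sum_vecs_Suc sum_distrib_left m chi_Cons sum.distrib algebra_simps monom_Suc flip: minus_monom)
qed

lemma G_closed: "G u = [:1,1:] ^ (length u - wH u) * [:1,-1:] ^ (wH u)"
proof (induction u)
  case Nil
  then show ?case by (simp add: G_def vecs_0 chi_def)
next
  case (Cons c u)
  have "wH u \<le> length u" by (simp add: wH_def)
  show ?case
  proof (cases c)
    case True
    then have "G (c#u) = [:1,-1:] * ([:1,1:] ^ (length u - wH u) * [:1,-1:] ^ (wH u))"
      using Cons by (simp add: G_Cons)
    also have "\<dots> = [:1,1:] ^ (length u - wH u) * [:1,-1:] ^ (Suc (wH u))"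
      by (simp only: power_Suc mult_ac)
    finally show ?thesis using True by simp
  next
    case False
    then have "G (c#u) = [:1,1:] * ([:1,1:] ^ (length u - wH u) * [:1,-1:] ^ (wH u))"
      using Cons by (simp add: G_Cons)
    also have "\<dots> = [:1,1:] ^ Suc (length u - wH u) * [:1,-1:] ^ (wH u)"
      by (simp only: power_Suc mult_ac)
    finally show ?thesis using False \<open>wH u \<le> length u\<close> by (simp add: Suc_diff_le)
  qed
qed

lemma coeff_G: "coeff (G u) j = (\<Sum>w\<in>{w\<in>vecs (length u). wH w = j}. chi w u)"
  unfolding G_def by (simp add: coeff_sum coeff_monom sum.inter_filter)

lemma poly_G1: "poly (G u) 1 = (\<Sum>w\<in>vecs (length u). chi w u)"
  unfolding G_def by (simp add: poly_sum poly_monom)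

lemma char_sum_zero: "0 < wH u \<Longrightarrow> (\<Sum>w\<in>vecs (length u). chi w u) = 0"
  by (simp flip: poly_G1 add: G_closed)

lemma dot_comm: "dot w u = dot u w"
proof (induction w arbitrary: u)
  case Nil then show ?case by simp
next
  case (Cons a w) then show ?case by (cases u) auto
qed

lemma dot_vadd: "length x = length y \<Longrightarrow> dot w (vadd x y) = (dot w x \<noteq> dot w y)"
proof (induction x arbitrary: y w)
  case Nil then show ?case by (simp add: vadd_def)
next
  case (Cons a x)
  then obtain b y' where "y = b # y'" by (cases y) auto
  with Cons show ?case by (cases w) (auto simp: vadd_def)
qed

lemma length_vadd[simp]: "length (vadd x y) = min (length x) (length y)"
  by (simp add: vadd_def)

lemma dot_append: "length w1 = length u1 \<Longrightarrow> dot (w1@w2) (u1@u2) = (dot w1 u1 \<noteq> dot w2 u2)"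
proof (induction w1 arbitrary: u1)
  case Nil then show ?case by simp
next
  case (Cons a w) then show ?case by (cases u1) auto
qed

lemma chi_vadd: "length x = length y \<Longrightarrow> chi w (vadd x y) = chi w x * chi w y"
  by (simp add: chi_def dot_vadd)

lemma wH_le: "wH u \<le> length u" by (simp add: wH_def)

lemma dual_distr_formula:
  assumes fin: "finite C" and ne: "C \<noteq> {}" and len: "\<forall>z\<in>C. length z = n"
  shows "dual_distr n C j = (\<Sum>w\<in>{w\<in>vecs n. wH w = j}. (\<Sum>z\<in>C. chi w z)^2) / real (card C)^2"
proof -
  define P where "P i = ([:1, 1:] ^ (n - i) * [:1, -1:] ^ i :: real poly)" for i
  define W where "W = {w\<in>vecs n. wH w = j}"
  define N where "N = real (card C)"
  have N0: "N > 0" using fin ne by (simp add: N_def card_gt_0_iff)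
  have dd: "dist_distr C i = (\<Sum>p\<in>C\<times>C. if dH (fst p) (snd p) = i then 1 else 0) / N" for i
  proof -
    have "{(x, y). x \<in> C \<and> y \<in> C \<and> dH x y = i} = {p\<in>C\<times>C. dH (fst p) (snd p) = i}" by auto
    then have "real (card {(x, y). x \<in> C \<and> y \<in> C \<and> dH x y = i}) = (\<Sum>p\<in>{p\<in>C\<times>C. dH (fst p) (snd p) = i}. 1)"
      by (simp only: real_of_card)
    also have "\<dots> = (\<Sum>p\<in>C\<times>C. if dH (fst p) (snd p) = i then 1 else 0)"
      using fin by (intro sum.inter_filter) simp
    finally show ?thesis by (simp add: dist_distr_def N_def)
  qed
  have cP: "coeff (P (dH x y)) j = (\<Sum>w\<in>W. chi w x * chi w y)" if "x \<in> C" "y \<in> C" for x y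
  proof -
    have lx: "length x = n" "length y = n" using that len by auto
    have "P (dH x y) = G (vadd x y)" unfolding P_def G_closed dH_def using lx by simp
    then show ?thesis using lx by (simp add: coeff_G W_def chi_vadd)
  qed
  have "dual_distr n C j = (1/N) * (\<Sum>i\<le>n. dist_distr C i * coeff (P i) j)"
    unfolding dual_distr_def P_def N_def by (simp add: coeff_sum)
  also have "\<dots> = (1/N) * (1/N) * (\<Sum>i\<le>n. \<Sum>p\<in>C\<times>C. (if dH (fst p) (snd p) = i then coeff (P i) j else 0))"
    by (simp add: dd sum_divide_distrib sum_distrib_right sum_distrib_left; intro sum.cong refl; simp)
  also have "(\<Sum>i\<le>n. \<Sum>p\<in>C\<times>C. (if dH (fst p) (snd p) = i then coeff (P i) j else 0))
      = (\<Sum>p\<in>C\<times>C. \<Sum>i\<le>n. (if dH (fst p) (snd p) = i then coeff (P i) j else 0))"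
    by (rule sum.swap)
  also have "\<dots> = (\<Sum>p\<in>C\<times>C. coeff (P (dH (fst p) (snd p))) j)"
  proof (rule sum.cong[OF refl])
    fix p assume "p \<in> C \<times> C"
    then have "dH (fst p) (snd p) \<le> n" using len by (auto simp: dH_def intro!: order.trans[OF wH_le])
    then show "(\<Sum>i\<le>n. (if dH (fst p) (snd p) = i then coeff (P i) j else 0)) = coeff (P (dH (fst p) (snd p))) j"
      by (simp add: sum.delta' eq_commute[of "dH (fst p) (snd p)"])
  qed
  also have "\<dots> = (\<Sum>p\<in>C\<times>C. \<Sum>w\<in>W. chi w (fst p) * chi w (snd p))"
    by (rule sum.cong[OF refl]) (auto simp: cP)
  also have "\<dots> = (\<Sum>w\<in>W. \<Sum>p\<in>C\<times>C. chi w (fst p) * chi w (snd p))"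
    by (rule sum.swap)
  also have "\<dots> = (\<Sum>w\<in>W. (\<Sum>z\<in>C. chi w z)^2)"
    by (intro sum.cong refl) (simp add: power2_eq_square sum_product sum.cartesian_product split_def)
  finally show ?thesis using N0 by (simp add: W_def N_def power2_eq_square)
qed

lemma dual_distance_ge:
  "dual_distance n C \<ge> enat (d+1) \<longleftrightarrow> (\<forall>j. 0 < j \<and> j \<le> d \<longrightarrow> dual_distr n C j = 0)"
proof (cases "\<exists>i>0. dual_distr n C i \<noteq> 0")
  case True
  define m where "m = (LEAST i. i > 0 \<and> dual_distr n C i \<noteq> 0)"
  have m: "m > 0 \<and> dual_distr n C m \<noteq> 0" unfolding m_def using True by (metis (mono_tags, lifting) LeastI)
  have mle: "m \<le> j" if "j > 0" "dual_distr n C j \<noteq> 0" for j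
    unfolding m_def using that by (simp add: Least_le)
  have "dual_distance n C = enat m" using True by (simp add: dual_distance_def m_def)
  show ?thesis
  proof
    assume "enat (d+1) \<le> dual_distance n C"
    then have "d + 1 \<le> m" using \<open>dual_distance n C = enat m\<close> by simp
    then show "\<forall>j. 0 < j \<and> j \<le> d \<longrightarrow> dual_distr n C j = 0"
    proof (intro allI impI)
      fix j assume "d + 1 \<le> m" "0 < j \<and> j \<le> d"
      then show "dual_distr n C j = 0" using mle[of j] by linarith
    qed
  next
    assume "\<forall>j. 0 < j \<and> j \<le> d \<longrightarrow> dual_distr n C j = 0"
    then have "\<not> m \<le> d" using m by blast
    then show "enat (d+1) \<le> dual_distance n C" using \<open>dual_distance n C = enat m\<close> by simp
  qed
next
  case False
  then have "dual_distance n C = \<infinity>" unfolding dual_distance_def by meson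
  moreover have "\<forall>j. 0<j \<and> j \<le> d \<longrightarrow> dual_distr n C j = 0" using False by blast
  ultimately show ?thesis by simp
qed

lemma dual_distr_zero_iff:
  assumes fin: "finite C" and ne: "C \<noteq> {}" and len: "\<forall>z\<in>C. length z = n"
  shows "dual_distr n C j = 0 \<longleftrightarrow> (\<forall>w\<in>vecs n. wH w = j \<longrightarrow> (\<Sum>z\<in>C. chi w z) = 0)"
proof -
  have N0: "real (card C) ^ 2 > 0" using fin ne by (simp add: card_gt_0_iff)
  have "dual_distr n C j = 0 \<longleftrightarrow> (\<Sum>w\<in>{w\<in>vecs n. wH w = j}. (\<Sum>z\<in>C. chi w z)^2) = 0"
    using N0 by (simp add: dual_distr_formula[OF assms])
  also have "\<dots> \<longleftrightarrow> (\<forall>w\<in>{w\<in>vecs n. wH w = j}. (\<Sum>z\<in>C. chi w z)^2 = 0)"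
    by (rule sum_nonneg_eq_0_iff) auto
  finally show ?thesis by auto
qed

lemma chi_append3:
  assumes "length a = length u" "length b = length v"
  shows "chi (a@b@c) (u@v@t) = chi a u * chi b v * chi c t"
  using assms by (simp add: chi_def dot_append)

lemma zero_vec_iff: "a \<in> vecs k \<Longrightarrow> (a = zero_vec k \<longleftrightarrow> wH a = 0)"
proof -
  assume "a \<in> vecs k"
  then have l: "length a = k" by (simp add: vecs_def)
  have "wH a = 0 \<longleftrightarrow> (\<forall>x\<in>set a. \<not> x)" by (simp add: wH_def filter_empty_conv)
  also have "\<dots> \<longleftrightarrow> a = replicate k False" using l
    by (metis (full_types) in_set_replicate replicate_eqI)
  finally show ?thesis by (simp add: zero_vec_def)
qed

lemma vecs3: "(\<forall>w\<in>vecs (3*k). P w) \<longleftrightarrow> (\<forall>a\<in>vecs k. \<forall>b\<in>vecs k. \<forall>c\<in>vecs k. P (a@b@c))"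
proof
  assume H: "\<forall>a\<in>vecs k. \<forall>b\<in>vecs k. \<forall>c\<in>vecs k. P (a@b@c)"
  show "\<forall>w\<in>vecs (3*k). P w"
  proof
    fix w assume w: "w \<in> vecs (3*k)"
    have "w = take k w @ take k (drop k w) @ drop k (drop k w)"
      by (metis append_take_drop_id)
    moreover have "take k w \<in> vecs k" "take k (drop k w) \<in> vecs k" "drop k (drop k w) \<in> vecs k"
      using w by (auto simp: vecs_def)
    ultimately show "P w" using H by (metis (no_types))
  qed
qed (auto simp: vecs_def)

definition WF :: "nat \<Rightarrow> (bool list \<Rightarrow> bool list) \<Rightarrow> bool list \<Rightarrow> bool list \<Rightarrow> real" where
  "WF k F a b = (\<Sum>x\<in>vecs k. chi a x * chi b (F x))"

lemma char_sum_zero': "a \<in> vecs k \<Longrightarrow> 0 < wH a \<Longrightarrow> (\<Sum>x\<in>vecs k. chi a x) = 0"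
  using char_sum_zero[of a] by (simp add: vecs_def chi_def dot_comm)

lemma WF_fourier:
  assumes "a \<in> vecs k" "0 < wH a"
  shows "WF k F a b = -2 * real_of_int (fourier k F b a)"
proof -
  have "WF k F a b = (\<Sum>x\<in>vecs k. chi a x - 2 * (if dot b (F x) then chi a x else 0))"
    unfolding WF_def by (intro sum.cong refl) (simp add: chi_def)
  also have "\<dots> = (\<Sum>x\<in>vecs k. chi a x) - 2 * (\<Sum>x\<in>vecs k. (if dot b (F x) then chi a x else 0))"
    by (simp add: sum_subtractf sum_distrib_left)
  also have "(\<Sum>x\<in>vecs k. (if dot b (F x) then chi a x else 0)) = (\<Sum>x\<in>{x\<in>vecs k. dot b (F x)}. chi a x)"
    by (simp add: sum.inter_filter)
  also have "\<dots> = real_of_int (fourier k F b a)"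
    unfolding fourier_def of_int_sum by (intro sum.cong refl) (simp add: chi_def)
  finally show ?thesis using char_sum_zero'[OF assms] by simp
qed

lemma dot_replicate_False: "dot (replicate n False) x = False"
proof (induction n arbitrary: x)
  case 0 then show ?case by simp
next
  case (Suc n) then show ?case by (cases x) auto
qed

lemma WF_zero:
  assumes "bij_betw F (vecs k) (vecs k)" "b \<in> vecs k" "0 < wH b"
  shows "WF k F (zero_vec k) b = 0"
proof -
  have "WF k F (zero_vec k) b = (\<Sum>x\<in>vecs k. chi b (F x))"
    unfolding WF_def by (intro sum.cong refl) (simp add: chi_def zero_vec_def dot_replicate_False)
  also have "\<dots> = (\<Sum>y\<in>vecs k. chi b y)"
    by (rule sum.reindex_bij_betw[OF assms(1)])
  finally show ?thesis using char_sum_zero'[OF assms(2,3)] by simp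
qed

lemma code_facts:
  assumes b1: "bij_betw F1 (vecs k) (vecs k)" and b2: "bij_betw F2 (vecs k) (vecs k)"
  shows "finite (code_CF k F1 F2)" "code_CF k F1 F2 \<noteq> {}"
    "\<forall>z\<in>code_CF k F1 F2. length z = 3*k"
    "\<And>a b c. a \<in> vecs k \<Longrightarrow> b \<in> vecs k \<Longrightarrow> c \<in> vecs k \<Longrightarrow>
       (\<Sum>z\<in>code_CF k F1 F2. chi (a@b@c) z) = WF k F1 a b * WF k F2 a c"
proof -
  define f where "f = (\<lambda>(x,y). vadd x y @ F1 x @ F2 y)"
  have C: "code_CF k F1 F2 = f ` (vecs k \<times> vecs k)"
    unfolding code_CF_def f_def by auto
  have F1v: "F1 x \<in> vecs k" if "x \<in> vecs k" for x using b1 that by (auto simp: bij_betw_def)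
  have F2v: "F2 x \<in> vecs k" if "x \<in> vecs k" for x using b2 that by (auto simp: bij_betw_def)
  have inj: "inj_on f (vecs k \<times> vecs k)"
  proof (rule inj_onI)
    fix p q assume p: "p \<in> vecs k \<times> vecs k" and q: "q \<in> vecs k \<times> vecs k" and e: "f p = f q"
    obtain x y where pxy: "p = (x,y)" by (cases p)
    obtain x' y' where qxy: "q = (x',y')" by (cases q)
    have l: "length x = k" "length y = k" "length x' = k" "length y' = k"
      "length (F1 x) = k" "length (F1 x') = k"
      using p q F1v[of x] F1v[of x'] by (auto simp: pxy qxy vecs_def)
    from e have "vadd x y @ F1 x @ F2 y = vadd x' y' @ F1 x' @ F2 y'" by (simp add: f_def pxy qxy)
    then have "F1 x @ F2 y = F1 x' @ F2 y'" using l by (simp add: append_eq_append_conv)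
    then have e1: "F1 x = F1 x'" and e2: "F2 y = F2 y'" using l by (simp_all add: append_eq_append_conv)
    have "x = x'" using e1 bij_betw_imp_inj_on[OF b1] p q by (auto simp: pxy qxy inj_on_def)
    moreover have "y = y'" using e2 bij_betw_imp_inj_on[OF b2] p q by (auto simp: pxy qxy inj_on_def)
    ultimately show "p = q" by (simp add: pxy qxy)
  qed
  show "finite (code_CF k F1 F2)" unfolding C by simp
  have "zero_vec k \<in> vecs k" by (simp add: vecs_def zero_vec_def)
  then show "code_CF k F1 F2 \<noteq> {}" unfolding C by blast
  show "\<forall>z\<in>code_CF k F1 F2. length z = 3*k"
    unfolding C f_def using F1v F2v by (auto simp: vecs_def)
  fix a b c assume abc: "a \<in> vecs k" "b \<in> vecs k" "c \<in> vecs k"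
  have "(\<Sum>z\<in>code_CF k F1 F2. chi (a@b@c) z) = (\<Sum>p\<in>vecs k \<times> vecs k. chi (a@b@c) (f p))"
    unfolding C by (rule sum.reindex[OF inj, unfolded comp_def])
  also have "\<dots> = (\<Sum>p\<in>vecs k \<times> vecs k. (chi a (fst p) * chi b (F1 (fst p))) * (chi a (snd p) * chi c (F2 (snd p))))"
  proof (rule sum.cong[OF refl])
    fix p assume p: "p \<in> vecs k \<times> vecs k"
    obtain x y where pxy: "p = (x,y)" by (cases p)
    have l: "length x = k" "length y = k" "length (F1 x) = k"
      using p F1v[of x] by (auto simp: pxy vecs_def)
    have "chi (a@b@c) (f p) = chi a (vadd x y) * chi b (F1 x) * chi c (F2 y)"
      using l abc by (simp add: f_def pxy chi_append3 vecs_def)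
    also have "\<dots> = (chi a x * chi b (F1 x)) * (chi a y * chi c (F2 y))"
      using l by (simp add: chi_vadd)
    finally show "chi (a@b@c) (f p) = (chi a (fst p) * chi b (F1 (fst p))) * (chi a (snd p) * chi c (F2 (snd p)))"
      by (simp add: pxy)
  qed
  also have "\<dots> = WF k F1 a b * WF k F2 a c"
    unfolding WF_def by (simp add: sum_product sum.cartesian_product split_def)
  finally show "(\<Sum>z\<in>code_CF k F1 F2. chi (a@b@c) z) = WF k F1 a b * WF k F2 a c" .
qed

theorem theorem1:
  fixes k d :: nat and F1 F2 :: "bool list \<Rightarrow> bool list"
  assumes "k \<ge> 1"
    and "bij_betw F1 (vecs k) (vecs k)"
    and "bij_betw F2 (vecs k) (vecs k)"
  shows "CIP k d F1 F2 \<longleftrightarrow> dual_distance (3 * k) (code_CF k F1 F2) \<ge> enat (d + 1)"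
proof -
  let ?C = "code_CF k F1 F2"
  note cf = code_facts[OF assms(2,3)]
  have "dual_distance (3 * k) ?C \<ge> enat (d + 1) \<longleftrightarrow>
      (\<forall>j. 0 < j \<and> j \<le> d \<longrightarrow> (\<forall>w\<in>vecs (3*k). wH w = j \<longrightarrow> (\<Sum>z\<in>?C. chi w z) = 0))"
    by (simp only: dual_distance_ge dual_distr_zero_iff[OF cf(1,2,3)])
  also have "\<dots> \<longleftrightarrow> (\<forall>w\<in>vecs (3*k). 0 < wH w \<and> wH w \<le> d \<longrightarrow> (\<Sum>z\<in>?C. chi w z) = 0)"
    by blast
  also have "\<dots> \<longleftrightarrow> (\<forall>a\<in>vecs k. \<forall>b\<in>vecs k. \<forall>c\<in>vecs k.
      0 < wH a + wH b + wH c \<and> wH a + wH b + wH c \<le> d \<longrightarrow> WF k F1 a b * WF k F2 a c = 0)"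
    by (simp add: vecs3 cf(4) add.assoc)
  also have "\<dots> \<longleftrightarrow> CIP k d F1 F2"
  proof
    assume Q: "\<forall>a\<in>vecs k. \<forall>b\<in>vecs k. \<forall>c\<in>vecs k.
      0 < wH a + wH b + wH c \<and> wH a + wH b + wH c \<le> d \<longrightarrow> WF k F1 a b * WF k F2 a c = 0"
    show "CIP k d F1 F2" unfolding CIP_def
    proof (intro ballI impI)
      fix a b c assume abc: "a \<in> vecs k" "b \<in> vecs k" "c \<in> vecs k"
        and h: "a \<noteq> zero_vec k \<and> wH a + wH b + wH c \<le> d"
      then have a0: "0 < wH a" using zero_vec_iff[OF abc(1)] by auto
      then have "WF k F1 a b * WF k F2 a c = 0" using Q abc h by auto
      then show "fourier k F1 b a = 0 \<or> fourier k F2 c a = 0"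
        using WF_fourier[OF abc(1) a0, of F1 b] WF_fourier[OF abc(1) a0, of F2 c] by simp
    qed
  next
    assume H: "CIP k d F1 F2"
    show "\<forall>a\<in>vecs k. \<forall>b\<in>vecs k. \<forall>c\<in>vecs k.
      0 < wH a + wH b + wH c \<and> wH a + wH b + wH c \<le> d \<longrightarrow> WF k F1 a b * WF k F2 a c = 0"
    proof (intro ballI impI)
      fix a b c assume abc: "a \<in> vecs k" "b \<in> vecs k" "c \<in> vecs k"
        and h: "0 < wH a + wH b + wH c \<and> wH a + wH b + wH c \<le> d"
      show "WF k F1 a b * WF k F2 a c = 0"
      proof (cases "wH a = 0")
        case True
        then have az: "a = zero_vec k" using zero_vec_iff[OF abc(1)] by simp
        show ?thesis
        proof (cases "wH b = 0")
          case True
          then have "0 < wH c" using h \<open>wH a = 0\<close> by simp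
          then show ?thesis using WF_zero[OF assms(3) abc(3)] az by simp
        next
          case False
          then show ?thesis using WF_zero[OF assms(2) abc(2)] az by simp
        qed
      next
        case False
        then have a0: "0 < wH a" by simp
        have "a \<noteq> zero_vec k" using zero_vec_iff[OF abc(1)] False by simp
        then have "fourier k F1 b a = 0 \<or> fourier k F2 c a = 0"
          using H abc h unfolding CIP_def by blast
        then show ?thesis
          using WF_fourier[OF abc(1) a0, of F1 b] WF_fourier[OF abc(1) a0, of F2 c] by auto
      qed
    qed
  qed
  finally show ?thesis by simp
qed

end
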